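(* Let $\mathbb{R}^2=\bigcup_{a=1}^{n}R_a$ and $\mathbb{R}^2=\bigcup_{b=1}^{n'}R'_b$ be two parabolic subdivisions of $\mathbb{R}^2$. Then the family of all intersections $R_a\cap R'_b$ that have nonempty interior is again a parabolic subdivision of $\mathbb{R}^2$.
   Context: A parabola is a set $\{(u,v): au^2+buv+cv^2+du+ev+f=0\}$ with $(a,b,c,d,e,f)\neq 0$ and $b^2-4ac=0$ (this includes lines and the empty set). A parabolic region is a set $\{s\in\mathbb{R}^2: a_is_1^2+b_is_1s_2+c_is_2^2+d_is_1+e_is_2+f_i\le 0,\ i=1,\dots,k\}$ with each $(a_i,\dots,f_i)\neq 0$ and $b_i^2-4a_ic_i=0$. A parabolic subdivision of a convex set $R$ is a finite union $R=\bigcup_i R_i$ of parabolic regions such that for $j\ne k$, $R_j\cap R_k$ is empty or contained in a parabola. *)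

theory Defs
  imports "HOL-Analysis.Analysis"
begin

type_synonym coeffs6 = "real \<times> real \<times> real \<times> real \<times> real \<times> real"

definition parabolic_coeffs :: "coeffs6 \<Rightarrow> bool" where
  "parabolic_coeffs q \<longleftrightarrow> (case q of (a,b,c,d,e,f) \<Rightarrow>
      (a,b,c,d,e,f) \<noteq> (0,0,0,0,0,0) \<and> b^2 - 4*a*c = 0)"

definition conic_eval :: "coeffs6 \<Rightarrow> real \<times> real \<Rightarrow> real" where
  "conic_eval q s = (case q of (a,b,c,d,e,f) \<Rightarrow> (case s of (u,v) \<Rightarrow>
      a*u^2 + b*u * v + c * v^2 + d*u + e * v + f))"

definition parabola :: "(real \<times> real) set \<Rightarrow> bool" where
  "parabola P \<longleftrightarrow> (\<exists>q. parabolic_coeffs q \<and> P = {s. conic_eval q s = 0})"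

definition parabolic_region :: "(real \<times> real) set \<Rightarrow> bool" where
  "parabolic_region R \<longleftrightarrow> (\<exists>qs :: coeffs6 list.
      (\<forall>q\<in>set qs. parabolic_coeffs q) \<and> R = {s. \<forall>q\<in>set qs. conic_eval q s \<le> 0})"

definition parabolic_subdivision ::
    "(real \<times> real) set \<Rightarrow> ('i \<Rightarrow> (real \<times> real) set) \<Rightarrow> 'i set \<Rightarrow> bool" where
  "parabolic_subdivision S Rs I \<longleftrightarrow>
     convex S \<and> finite I \<and> (\<forall>i\<in>I. parabolic_region (Rs i)) \<and> S = (\<Union>i\<in>I. Rs i) \<and>
     (\<forall>j\<in>I. \<forall>k\<in>I. j \<noteq> k \<longrightarrow>
        Rs j \<inter> Rs k = {} \<or> (\<exists>P. parabola P \<and> Rs j \<inter> Rs k \<subseteq> P))"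

end

theory Submission
  imports Defs
begin

lemma conic_eval_cont: "continuous_on UNIV (conic_eval q)"
proof -
  obtain a b c d e f where q: "q = (a,b,c,d,e,f)" by (cases q) auto
  have "conic_eval q = (\<lambda>s. a*(fst s)^2 + b*(fst s)*(snd s) + c*(snd s)^2 + d*(fst s) + e*(snd s) + f)"
    by (auto simp: q conic_eval_def split: prod.splits)
  then show ?thesis by (simp; intro continuous_intros)
qed

lemma region_closed: "parabolic_region R \<Longrightarrow> closed R"
proof -
  assume "parabolic_region R"
  then obtain qs where R: "R = {s. \<forall>q\<in>set qs. conic_eval q s \<le> 0}"
    unfolding parabolic_region_def by blast
  have "R = (\<Inter>q\<in>set qs. {s. conic_eval q s \<le> 0})" unfolding R by blast
  moreover have "closed {s. conic_eval q s \<le> (0::real)}" for q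
    by (rule closed_Collect_le[OF conic_eval_cont continuous_on_const])
  ultimately show "closed R" by auto
qed

lemma region_Int: "parabolic_region A \<Longrightarrow> parabolic_region B \<Longrightarrow> parabolic_region (A \<inter> B)"
proof -
  assume a: "parabolic_region A" and b: "parabolic_region B"
  obtain qs where h1: "\<forall>q\<in>set qs. parabolic_coeffs q" "A = {s. \<forall>q\<in>set qs. conic_eval q s \<le> 0}"
    using a unfolding parabolic_region_def by blast
  obtain ps where h2: "\<forall>q\<in>set ps. parabolic_coeffs q" "B = {s. \<forall>q\<in>set ps. conic_eval q s \<le> 0}"
    using b unfolding parabolic_region_def by blast
  have "\<forall>q\<in>set (qs@ps). parabolic_coeffs q" using h1(1) h2(1) by (metis Un_iff set_append)
  moreover have "A \<inter> B = {s. \<forall>q\<in>set (qs@ps). conic_eval q s \<le> 0}" unfolding h1(2) h2(2) by (simp only: set_append ball_Un) blast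
  ultimately show ?thesis unfolding parabolic_region_def by blast
qed

lemma finite_union_empty_interior:
  "finite F \<Longrightarrow> (\<And>i. i \<in> F \<Longrightarrow> closed (X i) \<and> interior (X i) = {}) \<Longrightarrow> interior (\<Union>i\<in>F. X i) = {}"
proof (induction F rule: finite_induct)
  case empty then show ?case by simp
next
  case (insert x F)
  have c: "closed (X x)" "interior (X x) = {}" using insert.prems by auto
  have "interior (\<Union>i\<in>F. X i) = {}" using insert.IH insert.prems by simp
  then have "interior ((\<Union>i\<in>F. X i) \<union> X x) = interior (X x)"
    using c by (subst Un_commute) (rule interior_closed_Un_empty_interior)
  then show ?case using c by (simp add: Un_commute)
qed

theorem proposition2:
  fixes R R' :: "nat \<Rightarrow> (real \<times> real) set" and n n' :: nat
  assumes "parabolic_subdivision UNIV R {1..n}"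
    and "parabolic_subdivision UNIV R' {1..n'}"
  shows "parabolic_subdivision UNIV (\<lambda>(a, b). R a \<inter> R' b)
           {(a, b). a \<in> {1..n} \<and> b \<in> {1..n'} \<and> interior (R a \<inter> R' b) \<noteq> {}}"
proof -
  define X where "X = (\<lambda>(a, b). R a \<inter> R' b)"
  define J where "J = {1..n} \<times> {1..n'}"
  define K where "K = {(a, b). a \<in> {1..n} \<and> b \<in> {1..n'} \<and> interior (R a \<inter> R' b) \<noteq> {}}"
  have memK: "(a, b) \<in> K \<longleftrightarrow> a \<in> {1..n} \<and> b \<in> {1..n'} \<and> interior (R a \<inter> R' b) \<noteq> {}" for a b
    unfolding K_def by simp
  have Xab: "X (a, b) = R a \<inter> R' b" for a b unfolding X_def by simp
  have A: "\<forall>i\<in>{1..n}. parabolic_region (R i)" "UNIV = (\<Union>i\<in>{1..n}. R i)"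
    "\<forall>j\<in>{1..n}. \<forall>k\<in>{1..n}. j \<noteq> k \<longrightarrow> R j \<inter> R k = {} \<or> (\<exists>P. parabola P \<and> R j \<inter> R k \<subseteq> P)"
    using assms(1) unfolding parabolic_subdivision_def by blast+
  have B: "\<forall>i\<in>{1..n'}. parabolic_region (R' i)" "UNIV = (\<Union>i\<in>{1..n'}. R' i)"
    "\<forall>j\<in>{1..n'}. \<forall>k\<in>{1..n'}. j \<noteq> k \<longrightarrow> R' j \<inter> R' k = {} \<or> (\<exists>P. parabola P \<and> R' j \<inter> R' k \<subseteq> P)"
    using assms(2) unfolding parabolic_subdivision_def by blast+
  have KJ: "K \<subseteq> J" unfolding K_def J_def by blast
  have finK: "finite K" by (rule finite_subset[OF KJ]) (simp add: J_def)
  have finJ: "finite J" by (simp add: J_def)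
  have reg: "parabolic_region (X i)" if iJ: "i \<in> J" for i
  proof -
    obtain a b where "i = (a, b)" "a \<in> {1..n}" "b \<in> {1..n'}" using iJ unfolding J_def by blast
    then show ?thesis using A(1) B(1) region_Int Xab by metis
  qed
  have cl: "closed (X i)" if "i \<in> J" for i using reg[OF that] region_closed by blast
  have allJ: "UNIV = (\<Union>i\<in>J. X i)"
  proof -
    { fix s :: "real \<times> real"
      obtain a where "a \<in> {1..n}" "s \<in> R a" using A(2) by blast
      moreover obtain b where "b \<in> {1..n'}" "s \<in> R' b" using B(2) by blast
      ultimately have "(a, b) \<in> J" "s \<in> X (a, b)" unfolding J_def Xab by blast+
      then have "s \<in> (\<Union>i\<in>J. X i)" by blast }
    then show ?thesis by blast
  qed
  have ie: "interior (X i) = {}" if iJ: "i \<in> J - K" for i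
  proof -
    obtain a b where "i = (a, b)" "a \<in> {1..n}" "b \<in> {1..n'}" using iJ unfolding J_def by blast
    then show ?thesis using iJ memK Xab by auto
  qed
  have intB: "interior (\<Union>i\<in>J - K. X i) = {}"
    by (rule finite_union_empty_interior) (use cl ie finJ in blast)+
  have clC: "closed (\<Union>i\<in>K. X i)"
    using cl KJ finK by (intro closed_UN) blast+
  have "UNIV = (\<Union>i\<in>K. X i) \<union> (\<Union>i\<in>J - K. X i)"
    using allJ KJ by blast
  then have "- (\<Union>i\<in>K. X i) \<subseteq> (\<Union>i\<in>J - K. X i)" by blast
  moreover have "open (- (\<Union>i\<in>K. X i))" by (rule open_Compl[OF clC])
  ultimately have "- (\<Union>i\<in>K. X i) \<subseteq> interior (\<Union>i\<in>J - K. X i)"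
    using interior_maximal by blast
  then have cov: "UNIV = (\<Union>i\<in>K. X i)" using intB by blast
  have pw: "\<forall>j\<in>K. \<forall>k\<in>K. j \<noteq> k \<longrightarrow>
        X j \<inter> X k = {} \<or> (\<exists>P. parabola P \<and> X j \<inter> X k \<subseteq> P)"
  proof (intro ballI impI)
    fix j k assume j: "j \<in> K" and k: "k \<in> K" and ne: "j \<noteq> k"
    obtain a b where j0: "j = (a, b)" by (cases j)
    then have jab: "j = (a, b)" "a \<in> {1..n}" "b \<in> {1..n'}" using j memK by auto
    obtain a' b' where k0: "k = (a', b')" by (cases k)
    then have kab: "k = (a', b')" "a' \<in> {1..n}" "b' \<in> {1..n'}" using k memK by auto
    show "X j \<inter> X k = {} \<or> (\<exists>P. parabola P \<and> X j \<inter> X k \<subseteq> P)"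
    proof (cases "a = a'")
      case False
      have sub: "X j \<inter> X k \<subseteq> R a \<inter> R a'" unfolding jab kab Xab by blast
      have "R a \<inter> R a' = {} \<or> (\<exists>P. parabola P \<and> R a \<inter> R a' \<subseteq> P)"
        using A(3) jab kab False by blast
      then show ?thesis using sub by blast
    next
      case True
      then have bb: "b \<noteq> b'" using ne jab kab by blast
      have sub: "X j \<inter> X k \<subseteq> R' b \<inter> R' b'" unfolding jab kab Xab by blast
      have "R' b \<inter> R' b' = {} \<or> (\<exists>P. parabola P \<and> R' b \<inter> R' b' \<subseteq> P)"
        using B(3) jab kab bb by blast
      then show ?thesis using sub by blast
    qed
  qed
  have regK: "\<forall>i\<in>K. parabolic_region (X i)" using reg KJ by blast
  have "parabolic_subdivision UNIV X K" unfolding parabolic_subdivision_def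
    using finK regK cov pw by (simp only: convex_UNIV simp_thms)
  then show ?thesis unfolding X_def K_def .
qed

end
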